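(* Fix $w,z\in S_n$ and let $\mathcal{L}=\{x\in C_z^\vee:\kappa(x)\ge\kappa(w)\}$. If $x,y\in\mathcal{L}$, then $x\cap y\in\mathcal{L}$ and $x\cup y\in\mathcal{L}$.
   Context: Permutations are in one-line notation. For $x\in S_n$: inversion table $\iota_k(x)=\#\{i<x^{-1}(k):x(i)>k\}$; code $\kappa_k(x)=\#\{i<x(k):x^{-1}(i)>k\}$. A permutation is determined by its inversion table, and a sequence $(c_1,\dots,c_n)$ is an inversion table iff $0\le c_k\le n-k$. Vectors are compared componentwise; the inversion table order on $S_n$ is $x\le y$ iff $\iota(x)\le\iota(y)$. For $x,y\in S_n$, $x\cap y$ and $x\cup y$ are the permutations with inversion tables the componentwise minimum and maximum of $\iota(x)$ and $\iota(y)$. For $z\in S_n$, $C_z^\vee$ is the Boolean sublattice of the inversion table order generated by the elements covered by $z$, namely the set of $x\in S_n$ with $\iota_k(z)-1\le\iota_k(x)\le\iota_k(z)$ for all $k$. *)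

theory Defs
  imports "HOL-Combinatorics.Permutations"
begin

text \<open>Permutations of S_n are functions nat => nat with p permutes {1..n};
  one-line notation: p i is the i-th entry.\<close>

definition iota :: "nat \<Rightarrow> (nat \<Rightarrow> nat) \<Rightarrow> nat \<Rightarrow> nat" where
  "iota n x k = card {i \<in> {1..n}. i < inv x k \<and> x i > k}"

definition kappa :: "nat \<Rightarrow> (nat \<Rightarrow> nat) \<Rightarrow> nat \<Rightarrow> nat" where
  "kappa n x k = card {i \<in> {1..n}. i < x k \<and> inv x i > k}"

definition perm_of_table :: "nat \<Rightarrow> (nat \<Rightarrow> nat) \<Rightarrow> (nat \<Rightarrow> nat)" where
  "perm_of_table n c = (THE p. p permutes {1..n} \<and> (\<forall>k\<in>{1..n}. iota n p k = c k))"

definition perm_meet :: "nat \<Rightarrow> (nat \<Rightarrow> nat) \<Rightarrow> (nat \<Rightarrow> nat) \<Rightarrow> (nat \<Rightarrow> nat)" where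
  "perm_meet n x y = perm_of_table n (\<lambda>k. min (iota n x k) (iota n y k))"

definition perm_join :: "nat \<Rightarrow> (nat \<Rightarrow> nat) \<Rightarrow> (nat \<Rightarrow> nat) \<Rightarrow> (nat \<Rightarrow> nat)" where
  "perm_join n x y = perm_of_table n (\<lambda>k. max (iota n x k) (iota n y k))"

definition Cvee :: "nat \<Rightarrow> (nat \<Rightarrow> nat) \<Rightarrow> (nat \<Rightarrow> nat) set" where
  "Cvee n z = {x. x permutes {1..n} \<and>
     (\<forall>k\<in>{1..n}. int (iota n z k) - 1 \<le> int (iota n x k) \<and> iota n x k \<le> iota n z k)}"

definition Lset :: "nat \<Rightarrow> (nat \<Rightarrow> nat) \<Rightarrow> (nat \<Rightarrow> nat) \<Rightarrow> (nat \<Rightarrow> nat) set" where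
  "Lset n w z = {x \<in> Cvee n z. \<forall>k\<in>{1..n}. kappa n w k \<le> kappa n x k}"

end

theory Submission
  imports Defs
begin

definition itab :: "nat list \<Rightarrow> nat \<Rightarrow> nat" where
  "itab xs v = length (filter (\<lambda>u. v < u) (takeWhile (\<lambda>u. u \<noteq> v) xs))"

definition ktab :: "nat list \<Rightarrow> nat \<Rightarrow> nat" where
  "ktab xs i = length (filter (\<lambda>u. u < xs ! i) (drop (Suc i) xs))"

lemma tw_split: "v \<notin> set as \<Longrightarrow> takeWhile (\<lambda>u. u \<noteq> v) (as @ v # bs) = as"
  by (induction as) auto

lemma itab_split: "v \<notin> set as \<Longrightarrow> itab (as @ v # bs) v = length (filter (\<lambda>u. v < u) as)"
  unfolding itab_def by (simp add: tw_split)

lemma itab_min_self: "m \<notin> set as \<Longrightarrow> \<forall>u\<in>set as. m < u \<Longrightarrow> itab (as @ m # bs) m = length as"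
  by (simp add: itab_split)

lemma itab_other:
  assumes "v \<noteq> m" "m < v"
  shows "itab (as @ m # bs) v = itab (as @ bs) v"
proof (cases "v \<in> set as")
  case True
  then obtain a1 a2 where as: "as = a1 @ v # a2" and "v \<notin> set a1"
    by (metis split_list_first)
  then show ?thesis using assms by (simp add: itab_def tw_split)
next
  case False
  then have "\<And>x. x \<in> set as \<Longrightarrow> x \<noteq> v" by blast
  then show ?thesis using assms by (simp add: itab_def takeWhile_append2)
qed

lemma ktab_split:
  assumes "\<forall>u\<in>set (as @ bs). m < u" "i < Suc (length as + length bs)"
  shows "ktab (as @ m # bs) i =
    (if i < length as then Suc (ktab (as @ bs) i) else if i = length as then 0
     else ktab (as @ bs) (i - 1))"
proof -
  consider (lt) "i < length as" | (eq) "i = length as" | (gt) "i > length as" by linarith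
  then show ?thesis
  proof cases
    case lt
    have "as ! i \<in> set as" using lt by simp
    then have "m < as ! i" using assms(1) by simp
    then show ?thesis using lt by (simp add: ktab_def nth_append)
  next
    case eq
    have "\<forall>u\<in>set bs. \<not> u < m"
    proof
      fix u assume "u \<in> set bs"
      then have "m < u" using assms(1) by simp
      then show "\<not> u < m" by simp
    qed
    then have "filter (\<lambda>u. u < m) bs = []" by (simp add: filter_empty_conv)
    then show ?thesis using eq by (simp add: ktab_def nth_append)
  next
    case gt
    then obtain j where j: "i = Suc (length as + j)" by (metis less_imp_Suc_add add_Suc_right)
    then show ?thesis using gt by (simp add: ktab_def nth_append)
  qed
qed

lemma split_min:
  fixes xs :: "nat list"
  assumes "distinct xs" "m \<in> set xs" "\<forall>u\<in>set xs. m \<le> u"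
  obtains as bs where "xs = as @ m # bs" "\<forall>u\<in>set (as @ bs). m < u" "distinct (as @ bs)"
    "set (as @ bs) = set xs - {m}"
proof -
  obtain as bs where xs: "xs = as @ m # bs" using assms(2) by (metis split_list)
  have "m \<notin> set (as @ bs)" using assms(1) xs by auto
  have "\<forall>u\<in>set (as @ bs). m < u"
  proof
    fix u assume u: "u \<in> set (as @ bs)"
    then have "u \<in> set xs" using xs by auto
    then have "m \<le> u" using assms(3) by blast
    moreover have "u \<noteq> m" using u \<open>m \<notin> set (as @ bs)\<close> by blast
    ultimately show "m < u" by simp
  qed
  moreover have "distinct (as @ bs)" using assms(1) xs by auto
  moreover have "set (as @ bs) = set xs - {m}" using xs \<open>m \<notin> set (as @ bs)\<close> by auto
  ultimately show ?thesis using that xs by blast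
qed

lemma arith_core:
  fixes A B C i kx ky km x1 x2 y1 y2 m1 m2 :: nat
  assumes "A \<le> B + 1" "B \<le> A + 1" "C = A \<or> C = B"
    "kx = (if i < A then Suc x1 else if i = A then 0 else x2)"
    "ky = (if i < B then Suc y1 else if i = B then 0 else y2)"
    "km = (if i < C then Suc m1 else if i = C then 0 else m2)"
    "i < C \<Longrightarrow> min x1 y1 \<le> m1" "i > C \<Longrightarrow> min x2 y2 \<le> m2"
  shows "min kx ky \<le> km"
  using assms by (auto split: if_splits)

lemma core:
  "length xs = n \<Longrightarrow> distinct xs \<Longrightarrow> distinct ys \<Longrightarrow> distinct ms \<Longrightarrow>
   set ys = set xs \<Longrightarrow> set ms = set xs \<Longrightarrow>
   (\<forall>v\<in>set xs. itab xs v \<le> itab ys v + 1 \<and> itab ys v \<le> itab xs v + 1) \<Longrightarrow>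
   (\<forall>v\<in>set xs. itab ms v = itab xs v \<or> itab ms v = itab ys v) \<Longrightarrow>
   i < n \<Longrightarrow> min (ktab xs i) (ktab ys i) \<le> ktab ms i"
proof (induction n arbitrary: xs ys ms i)
  case 0
  then show ?case by simp
next
  case (Suc n)
  have ne: "set xs \<noteq> {}" using Suc.prems(1) by auto
  define m where "m = Min (set xs)"
  have mx: "m \<in> set xs" using ne m_def by simp
  have mle: "\<forall>u\<in>set xs. m \<le> u" using m_def by simp
  obtain a1 b1 where x: "xs = a1 @ m # b1" "\<forall>u\<in>set (a1 @ b1). m < u" "distinct (a1 @ b1)"
    "set (a1 @ b1) = set xs - {m}"
    using split_min[OF Suc.prems(2) mx mle] by blast
  obtain a2 b2 where y: "ys = a2 @ m # b2" "\<forall>u\<in>set (a2 @ b2). m < u" "distinct (a2 @ b2)"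
    "set (a2 @ b2) = set xs - {m}"
    using split_min[OF Suc.prems(3)] mx mle Suc.prems(5) by (metis (no_types, lifting))
  obtain a3 b3 where mm: "ms = a3 @ m # b3" "\<forall>u\<in>set (a3 @ b3). m < u" "distinct (a3 @ b3)"
    "set (a3 @ b3) = set xs - {m}"
    using split_min[OF Suc.prems(4)] mx mle Suc.prems(6) by (metis (no_types, lifting))
  have lx: "length (a1 @ b1) = n" using x(1) Suc.prems(1) by simp
  have ly: "length ys = Suc n" using Suc.prems(1-3,5) by (metis distinct_card)
  have lm: "length ms = Suc n" using Suc.prems(1,2,4,6) by (metis distinct_card)
  have ia: "itab xs m = length a1" using x itab_min_self[of m a1 b1] by auto
  have ib: "itab ys m = length a2" using y itab_min_self[of m a2 b2] by auto
  have ic: "itab ms m = length a3" using mm itab_min_self[of m a3 b3] by auto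
  have ox: "itab xs v = itab (a1 @ b1) v" if "v \<in> set xs - {m}" for v
    using x that itab_other[of v m a1 b1] by auto
  have oy: "itab ys v = itab (a2 @ b2) v" if "v \<in> set xs - {m}" for v
    using y that x(4) itab_other[of v m a2 b2] by auto
  have om: "itab ms v = itab (a3 @ b3) v" if "v \<in> set xs - {m}" for v
    using mm that x(4) itab_other[of v m a3 b3] by auto
  have IH: "min (ktab (a1 @ b1) j) (ktab (a2 @ b2) j) \<le> ktab (a3 @ b3) j" if "j < n" for j
  proof (rule Suc.IH[OF lx x(3) y(3) mm(3)])
    show "set (a2 @ b2) = set (a1 @ b1)" using x(4) y(4) by simp
    show "set (a3 @ b3) = set (a1 @ b1)" using x(4) mm(4) by simp
    show "\<forall>v\<in>set (a1 @ b1). itab (a1 @ b1) v \<le> itab (a2 @ b2) v + 1 \<and> itab (a2 @ b2) v \<le> itab (a1 @ b1) v + 1"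
      using Suc.prems(7) ox oy x(4) by auto
    show "\<forall>v\<in>set (a1 @ b1). itab (a3 @ b3) v = itab (a1 @ b1) v \<or> itab (a3 @ b3) v = itab (a2 @ b2) v"
      using Suc.prems(8) ox oy om x(4) by auto
    show "j < n" by fact
  qed
  have kx: "ktab xs i = (if i < length a1 then Suc (ktab (a1 @ b1) i) else if i = length a1 then 0
     else ktab (a1 @ b1) (i - 1))"
    using ktab_split[of a1 b1 m i] x Suc.prems(9) lx by simp
  have ky: "ktab ys i = (if i < length a2 then Suc (ktab (a2 @ b2) i) else if i = length a2 then 0
     else ktab (a2 @ b2) (i - 1))"
    using ktab_split[of a2 b2 m i] y Suc.prems(9) ly by simp
  have km: "ktab ms i = (if i < length a3 then Suc (ktab (a3 @ b3) i) else if i = length a3 then 0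
     else ktab (a3 @ b3) (i - 1))"
    using ktab_split[of a3 b3 m i] mm Suc.prems(9) lm by simp
  have la3: "length a3 \<le> n" using lm mm(1) by simp
  show ?case
  proof (rule arith_core[OF _ _ _ kx ky km])
    show "length a1 \<le> length a2 + 1" "length a2 \<le> length a1 + 1"
      using Suc.prems(7) mx ia ib by auto
    show "length a3 = length a1 \<or> length a3 = length a2"
      using Suc.prems(8) mx ia ib ic by auto
    show "min (ktab (a1 @ b1) i) (ktab (a2 @ b2) i) \<le> ktab (a3 @ b3) i" if "i < length a3"
      using IH that la3 by simp
    show "min (ktab (a1 @ b1) (i - 1)) (ktab (a2 @ b2) (i - 1)) \<le> ktab (a3 @ b3) (i - 1)"
      if "i > length a3"
      using IH that Suc.prems(9) by simp
  qed
qed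


lemma list_unique:
  "length xs = n \<Longrightarrow> distinct xs \<Longrightarrow> distinct ys \<Longrightarrow> set ys = set xs \<Longrightarrow>
   (\<forall>v\<in>set xs. itab xs v = itab ys v) \<Longrightarrow> xs = ys"
proof (induction n arbitrary: xs ys)
  case 0
  then show ?case by simp
next
  case (Suc n)
  have ne: "set xs \<noteq> {}" using Suc.prems(1) by auto
  define m where "m = Min (set xs)"
  have mx: "m \<in> set xs" using ne m_def by simp
  have mle: "\<forall>u\<in>set xs. m \<le> u" using m_def by simp
  obtain a1 b1 where x: "xs = a1 @ m # b1" "\<forall>u\<in>set (a1 @ b1). m < u" "distinct (a1 @ b1)"
    "set (a1 @ b1) = set xs - {m}"
    using split_min[OF Suc.prems(2) mx mle] by blast
  obtain a2 b2 where y: "ys = a2 @ m # b2" "\<forall>u\<in>set (a2 @ b2). m < u" "distinct (a2 @ b2)"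
    "set (a2 @ b2) = set xs - {m}"
    using split_min[OF Suc.prems(3)] mx mle Suc.prems(4) by (metis (no_types, lifting))
  have lx: "length (a1 @ b1) = n" using x(1) Suc.prems(1) by simp
  have ia: "itab xs m = length a1" using x itab_min_self[of m a1 b1] by auto
  have ib: "itab ys m = length a2" using y itab_min_self[of m a2 b2] by auto
  have ox: "itab xs v = itab (a1 @ b1) v" if "v \<in> set xs - {m}" for v
    using x that itab_other[of v m a1 b1] by auto
  have oy: "itab ys v = itab (a2 @ b2) v" if "v \<in> set xs - {m}" for v
    using y that x(4) itab_other[of v m a2 b2] by auto
  have e: "a1 @ b1 = a2 @ b2"
  proof (rule Suc.IH[OF lx x(3) y(3)])
    show "set (a2 @ b2) = set (a1 @ b1)" using x(4) y(4) by simp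
    show "\<forall>v\<in>set (a1 @ b1). itab (a1 @ b1) v = itab (a2 @ b2) v"
      using Suc.prems(5) ox oy x(4) by auto
  qed
  have "length a1 = length a2" using ia ib Suc.prems(5) mx by simp
  then have "a1 = a2 \<and> b1 = b2" using e by (simp add: append_eq_append_conv)
  then show ?case using x(1) y(1) by simp
qed

lemma itab_bound:
  assumes "distinct xs"
  shows "itab xs v \<le> card {u \<in> set xs. v < u}"
proof -
  let ?t = "takeWhile (\<lambda>u. u \<noteq> v) xs"
  have d: "distinct ?t" using assms distinct_append[of ?t "dropWhile (\<lambda>u. u \<noteq> v) xs"] by simp
  have "itab xs v = card ({u. v < u} \<inter> set ?t)"
    unfolding itab_def using distinct_length_filter[OF d] by simp
  also have "\<dots> \<le> card {u \<in> set xs. v < u}"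
    by (rule card_mono) (auto dest: set_takeWhileD)
  finally show ?thesis .
qed

lemma list_exists:
  "finite S \<Longrightarrow> card S = n \<Longrightarrow> (\<forall>v\<in>S. c v \<le> card {u \<in> S. v < u}) \<Longrightarrow>
   \<exists>xs. distinct xs \<and> set xs = S \<and> (\<forall>v\<in>S. itab xs v = c v)"
proof (induction n arbitrary: S)
  case 0
  then show ?case by (intro exI[of _ "[]"]) simp
next
  case (Suc n)
  have ne: "S \<noteq> {}" using Suc.prems by auto
  define m where "m = Min S"
  have mS: "m \<in> S" using ne m_def Suc.prems(1) by simp
  have mle: "\<forall>u\<in>S. m \<le> u" using m_def Suc.prems(1) by simp
  define S' where "S' = S - {m}"
  have cS': "card S' = n" using Suc.prems(1,2) mS S'_def by simp
  have gt: "\<forall>u\<in>S'. m < u"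
  proof
    fix u assume "u \<in> S'"
    then have "u \<in> S" "u \<noteq> m" using S'_def by auto
    then show "m < u" using mle by (simp add: order_le_neq_trans)
  qed
  have eqc: "{u \<in> S. v < u} = {u \<in> S'. v < u}" if "v \<in> S'" for v
  proof -
    have "m < v" using that gt by blast
    then show ?thesis using that S'_def by auto
  qed
  obtain ws where ws: "distinct ws" "set ws = S'" "\<forall>v\<in>S'. itab ws v = c v"
  proof -
    have "finite S'" using Suc.prems(1) S'_def by simp
    moreover have "\<forall>v\<in>S'. c v \<le> card {u \<in> S'. v < u}"
    proof
      fix v assume v: "v \<in> S'"
      then have "v \<in> S" using S'_def by simp
      then have "c v \<le> card {u \<in> S. v < u}" using Suc.prems(3) by blast
      then show "c v \<le> card {u \<in> S'. v < u}" using eqc[OF v] by simp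
    qed
    ultimately show ?thesis using Suc.IH[of S'] cS' that by blast
  qed
  have lws: "length ws = n" using ws(1,2) cS' distinct_card[of ws] by simp
  have "{u \<in> S. m < u} = S'" using S'_def gt by auto
  then have cm: "c m \<le> n" using Suc.prems(3) mS cS' by auto
  define xs where "xs = take (c m) ws @ m # drop (c m) ws"
  have mnot: "m \<notin> set ws" using ws S'_def by simp
  have dx: "distinct xs" unfolding xs_def using ws(1) mnot distinct_append[of "take (c m) ws" "drop (c m) ws"]
    by (auto dest: in_set_dropD in_set_takeD)
  have "set (take (c m) ws) \<union> set (drop (c m) ws) = set ws" by (metis append_take_drop_id set_append)
  then have sx: "set xs = S" unfolding xs_def using ws(2) mS S'_def by auto
  have "\<forall>u\<in>set (take (c m) ws). m < u" using gt ws(2) by (meson in_set_takeD)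
  then have im: "itab xs m = c m" unfolding xs_def using mnot lws cm
    by (subst itab_min_self) (auto dest: in_set_takeD)
  have io: "itab xs v = c v" if "v \<in> S'" for v
  proof -
    have "itab xs v = itab (take (c m) ws @ drop (c m) ws) v"
      unfolding xs_def using that gt by (intro itab_other) auto
    then show ?thesis using ws(3) that by simp
  qed
  show ?case using dx sx im io S'_def by (intro exI[of _ xs]) auto
qed

definition lst :: "nat \<Rightarrow> (nat \<Rightarrow> nat) \<Rightarrow> nat list" where
  "lst n p = map p [1..<Suc n]"

lemma lst_nth: "i \<in> {1..n} \<Longrightarrow> lst n p ! (i - 1) = p i"
  unfolding lst_def by (auto simp del: upt_Suc simp: nth_map nth_upt)

lemma lst_props:
  assumes "p permutes {1..n}"
  shows "distinct (lst n p)" "set (lst n p) = {1..n}" "length (lst n p) = n"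
proof -
  have "inj_on p {1..n}" using assms permutes_inj_on by blast
  then show "distinct (lst n p)" unfolding lst_def
    by (simp del: upt_Suc add: distinct_map atLeastLessThanSuc_atLeastAtMost)
  show "set (lst n p) = {1..n}" unfolding lst_def using permutes_image[OF assms]
    by (simp del: upt_Suc add: atLeastLessThanSuc_atLeastAtMost)
  show "length (lst n p) = n" by (simp add: lst_def)
qed

lemma iota_bridge:
  assumes p: "p permutes {1..n}" and k: "k \<in> {1..n}"
  shows "iota n p k = itab (lst n p) k"
proof -
  define j where "j = inv p k"
  have pj: "p j = k" using p j_def by (simp add: permutes_inverses(1))
  have jr: "j \<in> {1..n}" using p k j_def
    by (metis permutes_inv permutes_in_image)
  have ups: "[1..<Suc n] = [1..<j] @ j # [Suc j..<Suc n]"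
  proof -
    have a: "[1..<Suc n] = [1..<j] @ [j..<Suc n]"
      using upt_add_eq_append[of 1 j "Suc n - j"] jr by (simp del: upt_Suc)
    have b: "[j..<Suc n] = j # [Suc j..<Suc n]"
      using jr by (simp del: upt_Suc add: upt_conv_Cons)
    show ?thesis using a b by simp
  qed
  have inj: "inj_on p {1..n}" using p permutes_inj_on by blast
  have notin: "k \<notin> set (map p [1..<j])"
  proof
    assume "k \<in> set (map p [1..<j])"
    then obtain i where i: "i \<in> {1..<j}" "p i = k" by auto
    then have "i \<in> {1..n}" using jr by auto
    then have "i = j" using inj jr i pj by (metis inj_onD)
    then show False using i by simp
  qed
  have "itab (lst n p) k = length (filter (\<lambda>u. k < u) (map p [1..<j]))"
    unfolding lst_def ups using notin pj by (simp add: itab_split)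
  also have "\<dots> = length (filter (\<lambda>i. k < p i) [1..<j])" by (simp del: upt_Suc add: filter_map o_def)
  also have "\<dots> = card ({i. k < p i} \<inter> {1..<j})"
    by (simp del: upt_Suc add: distinct_length_filter)
  also have "\<dots> = card {i \<in> {1..n}. i < inv p k \<and> k < p i}"
    using jr j_def by (intro arg_cong[where f = card]) auto
  finally show ?thesis unfolding iota_def by simp
qed

lemma kappa_bridge:
  assumes p: "p permutes {1..n}" and k: "k \<in> {1..n}"
  shows "kappa n p k = ktab (lst n p) (k - 1)"
proof -
  have inj: "inj_on p {1..n}" using p permutes_inj_on by blast
  have nth: "lst n p ! (k - 1) = p k" using k by (rule lst_nth)
  have dr: "drop (Suc (k - 1)) (lst n p) = map p [Suc k..<Suc n]"
    using k unfolding lst_def by (simp del: upt_Suc add: drop_map)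
  have "ktab (lst n p) (k - 1) = length (filter (\<lambda>u. u < p k) (map p [Suc k..<Suc n]))"
    unfolding ktab_def nth dr by simp
  also have "\<dots> = length (filter (\<lambda>j. p j < p k) [Suc k..<Suc n])" by (simp del: upt_Suc add: filter_map o_def)
  also have "\<dots> = card ({j. p j < p k} \<inter> {Suc k..<Suc n})"
    by (simp del: upt_Suc add: distinct_length_filter)
  also have "\<dots> = card (p ` ({j. p j < p k} \<inter> {Suc k..<Suc n}))"
    by (rule card_image[symmetric]) (rule inj_on_subset[OF inj], auto)
  also have "p ` ({j. p j < p k} \<inter> {Suc k..<Suc n}) = {i \<in> {1..n}. i < p k \<and> k < inv p i}"
  proof (intro equalityI subsetI)
    fix i assume "i \<in> p ` ({j. p j < p k} \<inter> {Suc k..<Suc n})"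
    then obtain j where j: "i = p j" "p j < p k" "j \<in> {Suc k..<Suc n}" by auto
    have "j \<in> {1..n}" using j k by auto
    then have "p j \<in> {1..n}" using permutes_in_image[OF p] by blast
    moreover have "inv p (p j) = j" using p by (simp add: permutes_inverses(2))
    ultimately show "i \<in> {i \<in> {1..n}. i < p k \<and> k < inv p i}" using j by auto
  next
    fix i assume i: "i \<in> {i \<in> {1..n}. i < p k \<and> k < inv p i}"
    define j where "j = inv p i"
    have "p j = i" using p j_def by (simp add: permutes_inverses(1))
    moreover have "j \<in> {1..n}" using i p j_def by (metis mem_Collect_eq permutes_inv permutes_in_image)
    ultimately show "i \<in> p ` ({j. p j < p k} \<inter> {Suc k..<Suc n})" using i j_def
      by (intro image_eqI[of _ _ j]) auto
  qed
  finally show ?thesis unfolding kappa_def by simp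
qed

lemma list_to_perm:
  assumes "distinct xs" "set xs = {1..n}"
  shows "\<exists>p. p permutes {1..n} \<and> lst n p = xs"
proof -
  have len: "length xs = n" using assms distinct_card by fastforce
  define p where "p = (\<lambda>i. if i \<in> {1..n} then xs ! (i - 1) else i)"
  have "inj_on p {1..n}"
  proof (rule inj_onI)
    fix a b assume "a \<in> {1..n}" "b \<in> {1..n}" "p a = p b"
    then have "xs ! (a - 1) = xs ! (b - 1)" by (simp add: p_def)
    moreover have "a - 1 < length xs" "b - 1 < length xs"
      using len \<open>a \<in> {1..n}\<close> \<open>b \<in> {1..n}\<close> by auto
    ultimately have "a - 1 = b - 1" using nth_eq_iff_index_eq[OF assms(1)] by blast
    moreover have "1 \<le> a" "1 \<le> b" using \<open>a \<in> {1..n}\<close> \<open>b \<in> {1..n}\<close> by auto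
    ultimately show "a = b" by arith
  qed
  moreover have "p ` {1..n} = {1..n}"
  proof -
    have "p ` {1..n} = (\<lambda>i. xs ! (i - 1)) ` {1..n}" by (simp add: p_def)
    also have "\<dots> = (\<lambda>i. xs ! i) ` {0..<n}"
    proof (intro equalityI subsetI)
      fix y assume "y \<in> (\<lambda>i. xs ! (i - 1)) ` {1..n}"
      then obtain i where "i \<in> {1..n}" "y = xs ! (i - 1)" by auto
      then show "y \<in> (\<lambda>i. xs ! i) ` {0..<n}" by (intro image_eqI[of _ _ "i - 1"]) auto
    next
      fix y assume "y \<in> (\<lambda>i. xs ! i) ` {0..<n}"
      then obtain i where "i < n" "y = xs ! i" by auto
      then show "y \<in> (\<lambda>i. xs ! (i - 1)) ` {1..n}" by (intro image_eqI[of _ _ "Suc i"]) auto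
    qed
    also have "\<dots> = set xs" using len by (auto simp: in_set_conv_nth)
    finally show ?thesis using assms(2) by simp
  qed
  ultimately have "bij_betw p {1..n} {1..n}" by (simp add: bij_betw_def)
  then have pp: "p permutes {1..n}" by (rule bij_imp_permutes) (auto simp: p_def)
  have "lst n p = xs" unfolding lst_def using len
    by (intro nth_equalityI) (auto simp del: upt_Suc simp: p_def nth_map nth_upt)
  then show ?thesis using pp by blast
qed

lemma card_gt: "k \<in> {1..n} \<Longrightarrow> card {u \<in> {1..n}. k < u} = n - (k::nat)"
proof -
  assume "k \<in> {1..n}"
  then have "{u \<in> {1..n}. k < u} = {Suc k..n}" by auto
  then show ?thesis by simp
qed

lemma iota_le:
  assumes "p permutes {1..n}" "k \<in> {1..n}" shows "iota n p k \<le> n - k"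
proof -
  have "iota n p k = itab (lst n p) k" using iota_bridge[OF assms] .
  also have "\<dots> \<le> card {u \<in> set (lst n p). k < u}" by (rule itab_bound[OF lst_props(1)[OF assms(1)]])
  also have "\<dots> = n - k" using lst_props(2)[OF assms(1)] card_gt[OF assms(2)] by simp
  finally show ?thesis .
qed

lemma table_unique:
  assumes "p permutes {1..n}" "q permutes {1..n}" "\<forall>k\<in>{1..n}. iota n p k = iota n q k"
  shows "p = q"
proof -
  have "lst n p = lst n q"
  proof (rule list_unique[OF lst_props(3)[OF assms(1)] lst_props(1)[OF assms(1)] lst_props(1)[OF assms(2)]])
    show "set (lst n q) = set (lst n p)" using lst_props(2)[OF assms(1)] lst_props(2)[OF assms(2)] by simp
    show "\<forall>v\<in>set (lst n p). itab (lst n p) v = itab (lst n q) v"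
    proof
      fix v assume "v \<in> set (lst n p)"
      then have v: "v \<in> {1..n}" using lst_props(2)[OF assms(1)] by simp
      show "itab (lst n p) v = itab (lst n q) v"
        using iota_bridge[OF assms(1) v] iota_bridge[OF assms(2) v] assms(3) v by simp
    qed
  qed
  show "p = q"
  proof
    fix i show "p i = q i"
    proof (cases "i \<in> {1..n}")
      case True
      have "lst n p ! (i - 1) = p i" "lst n q ! (i - 1) = q i"
        using lst_nth[OF True, of p] lst_nth[OF True, of q] by auto
      then show ?thesis using \<open>lst n p = lst n q\<close> by simp
    next
      case False
      then show ?thesis using assms(1,2) by (simp add: permutes_not_in)
    qed
  qed
qed

lemma table_exists:
  assumes "\<forall>k\<in>{1..n}. c k \<le> n - k"
  shows "\<exists>p. p permutes {1..n} \<and> (\<forall>k\<in>{1..n}. iota n p k = c k)"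
proof -
  obtain xs where xs: "distinct xs" "set xs = {1..n}" "\<forall>v\<in>{1..n}. itab xs v = c v"
    using list_exists[of "{1..n}" "card {1..n}" c] assms card_gt by auto
  obtain p where p: "p permutes {1..n}" "lst n p = xs" using list_to_perm[OF xs(1,2)] by blast
  show ?thesis using p xs(3) iota_bridge by (intro exI[of _ p]) auto
qed

lemma perm_of_table_props:
  assumes "\<forall>k\<in>{1..n}. c k \<le> n - k"
  shows "perm_of_table n c permutes {1..n} \<and> (\<forall>k\<in>{1..n}. iota n (perm_of_table n c) k = c k)"
proof -
  have "\<exists>!p. p permutes {1..n} \<and> (\<forall>k\<in>{1..n}. iota n p k = c k)"
  proof -
    obtain p where "p permutes {1..n} \<and> (\<forall>k\<in>{1..n}. iota n p k = c k)"
      using table_exists[OF assms] by blast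
    moreover have "q = p" if "q permutes {1..n} \<and> (\<forall>k\<in>{1..n}. iota n q k = c k)"
      and "p permutes {1..n} \<and> (\<forall>k\<in>{1..n}. iota n p k = c k)" for q p
      using table_unique[of q n p] that by simp
    ultimately show ?thesis by blast
  qed
  then show ?thesis unfolding perm_of_table_def by (rule theI')
qed

theorem lemma5p2:
  fixes n :: nat and w z x y :: "nat \<Rightarrow> nat"
  assumes "w permutes {1..n}" and "z permutes {1..n}"
    and "x \<in> Lset n w z" and "y \<in> Lset n w z"
  shows "perm_meet n x y \<in> Lset n w z \<and> perm_join n x y \<in> Lset n w z"
proof -
  have xp: "x permutes {1..n}" and yp: "y permutes {1..n}"
    using assms(3,4) by (auto simp: Lset_def Cvee_def)
  have xc: "\<forall>k\<in>{1..n}. int (iota n z k) - 1 \<le> int (iota n x k) \<and> iota n x k \<le> iota n z k"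
    and yc: "\<forall>k\<in>{1..n}. int (iota n z k) - 1 \<le> int (iota n y k) \<and> iota n y k \<le> iota n z k"
    using assms(3,4) by (auto simp: Lset_def Cvee_def)
  have xw: "\<forall>k\<in>{1..n}. kappa n w k \<le> kappa n x k" and yw: "\<forall>k\<in>{1..n}. kappa n w k \<le> kappa n y k"
    using assms(3,4) by (auto simp: Lset_def)
  have gen: "m \<in> Lset n w z"
    if mp: "m permutes {1..n}"
      and mi: "\<forall>k\<in>{1..n}. iota n m k = iota n x k \<or> iota n m k = iota n y k" for m
  proof -
    have mc: "\<forall>k\<in>{1..n}. int (iota n z k) - 1 \<le> int (iota n m k) \<and> iota n m k \<le> iota n z k"
    proof
      fix k assume k: "k \<in> {1..n}"
      show "int (iota n z k) - 1 \<le> int (iota n m k) \<and> iota n m k \<le> iota n z k"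
        using mi[rule_format, OF k] xc[rule_format, OF k] yc[rule_format, OF k] by auto
    qed
    have "kappa n w k \<le> kappa n m k" if k: "k \<in> {1..n}" for k
    proof -
      have "min (ktab (lst n x) (k - 1)) (ktab (lst n y) (k - 1)) \<le> ktab (lst n m) (k - 1)"
      proof (rule core[OF lst_props(3)[OF xp] lst_props(1)[OF xp] lst_props(1)[OF yp] lst_props(1)[OF mp]])
        show "set (lst n y) = set (lst n x)" "set (lst n m) = set (lst n x)"
          using lst_props(2) xp yp mp by auto
        show "\<forall>v\<in>set (lst n x). itab (lst n x) v \<le> itab (lst n y) v + 1 \<and> itab (lst n y) v \<le> itab (lst n x) v + 1"
        proof
          fix v assume "v \<in> set (lst n x)"
          then have v: "v \<in> {1..n}" using lst_props(2)[OF xp] by simp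
          show "itab (lst n x) v \<le> itab (lst n y) v + 1 \<and> itab (lst n y) v \<le> itab (lst n x) v + 1"
            using xc[rule_format, OF v] yc[rule_format, OF v] iota_bridge[OF xp v] iota_bridge[OF yp v] by simp
        qed
        show "\<forall>v\<in>set (lst n x). itab (lst n m) v = itab (lst n x) v \<or> itab (lst n m) v = itab (lst n y) v"
        proof
          fix v assume "v \<in> set (lst n x)"
          then have v: "v \<in> {1..n}" using lst_props(2)[OF xp] by simp
          show "itab (lst n m) v = itab (lst n x) v \<or> itab (lst n m) v = itab (lst n y) v"
            using mi[rule_format, OF v] iota_bridge[OF xp v] iota_bridge[OF yp v] iota_bridge[OF mp v] by simp
        qed
        show "k - 1 < n" using k by auto
      qed
      then have "min (kappa n x k) (kappa n y k) \<le> kappa n m k"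
        using kappa_bridge[OF xp k] kappa_bridge[OF yp k] kappa_bridge[OF mp k] by simp
      then show ?thesis using xw[rule_format, OF k] yw[rule_format, OF k] by simp
    qed
    then show ?thesis using mp mc by (simp add: Lset_def Cvee_def)
  qed
  have v1: "\<forall>k\<in>{1..n}. min (iota n x k) (iota n y k) \<le> n - k"
    using iota_le xp by (simp add: min.coboundedI1)
  have v2: "\<forall>k\<in>{1..n}. max (iota n x k) (iota n y k) \<le> n - k"
    using iota_le xp yp by simp
  show ?thesis
    using perm_of_table_props[OF v1] perm_of_table_props[OF v2]
    unfolding perm_meet_def perm_join_def
    by (intro conjI gen) (auto simp: min_def max_def)
qed

end
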